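(* Let $\Gamma$ be a Deza graph with parameters $(n,k,k-1,a)$, $k>1$, $\beta=1$. Let $x,y$ be $NA$-vertices with $C(x)\ne C(y)$. Then (1) $x'$ and $y$ are adjacent if and only if $x$ and $y'$ are adjacent; (2) $x$ and $y$ are adjacent if and only if $x'$ and $y'$ are adjacent.
   Context: A Deza graph with parameters $(n,k,b,a)$, $a\le b$, is a $k$-regular graph on $n$ vertices in which any two distinct vertices have $a$ or $b$ common neighbours; $\beta$ is the number of vertices $u\ne v$ with exactly $b$ common neighbours with a given vertex $v$. Since $\beta=1$, for each vertex $x$ let $x_b$ denote the unique vertex having $b=k-1$ common neighbours with $x$. A vertex $x$ is an $A$-vertex if $x$ is adjacent to $x_b$, and an $NA$-vertex otherwise. For an $NA$-vertex $x$, $x'$ denotes the unique neighbour of $x$ not adjacent to $x_b$, $x_b'=(x')_b=(x_b)'$, and $C(x)=\{x,x',x_b,x_b'\}$. *)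

theory Defs
  imports Main
begin

text \<open>A simple graph is given by a vertex set V and an adjacency relation E
 (only its restriction to V matters).\<close>

definition common_nbrs :: "'a set \<Rightarrow> ('a \<Rightarrow> 'a \<Rightarrow> bool) \<Rightarrow> 'a \<Rightarrow> 'a \<Rightarrow> nat" where
  "common_nbrs V E u v = card {w \<in> V. E u w \<and> E v w}"

definition deza_graph :: "'a set \<Rightarrow> ('a \<Rightarrow> 'a \<Rightarrow> bool) \<Rightarrow> nat \<Rightarrow> nat \<Rightarrow> nat \<Rightarrow> nat \<Rightarrow> bool" where
  "deza_graph V E n k b a \<longleftrightarrow>
     finite V \<and> card V = n \<and>
     (\<forall>x\<in>V. \<forall>y\<in>V. E x y \<longrightarrow> E y x) \<and>
     (\<forall>x\<in>V. \<not> E x x) \<and>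
     (\<forall>x\<in>V. card {y \<in> V. E x y} = k) \<and>
     a \<le> b \<and>
     (\<forall>u\<in>V. \<forall>v\<in>V. u \<noteq> v \<longrightarrow> common_nbrs V E u v = a \<or> common_nbrs V E u v = b)"

definition deza_beta :: "'a set \<Rightarrow> ('a \<Rightarrow> 'a \<Rightarrow> bool) \<Rightarrow> nat \<Rightarrow> 'a \<Rightarrow> nat" where
  "deza_beta V E b v = card {u \<in> V. u \<noteq> v \<and> common_nbrs V E u v = b}"

text \<open>x_b: the unique vertex having b common neighbours with x (meaningful when beta = 1).\<close>
definition vb :: "'a set \<Rightarrow> ('a \<Rightarrow> 'a \<Rightarrow> bool) \<Rightarrow> nat \<Rightarrow> 'a \<Rightarrow> 'a" where
  "vb V E b x = (THE y. y \<in> V \<and> y \<noteq> x \<and> common_nbrs V E x y = b)"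

definition A_vertex :: "'a set \<Rightarrow> ('a \<Rightarrow> 'a \<Rightarrow> bool) \<Rightarrow> nat \<Rightarrow> 'a \<Rightarrow> bool" where
  "A_vertex V E b x \<longleftrightarrow> E x (vb V E b x)"

definition NA_vertex :: "'a set \<Rightarrow> ('a \<Rightarrow> 'a \<Rightarrow> bool) \<Rightarrow> nat \<Rightarrow> 'a \<Rightarrow> bool" where
  "NA_vertex V E b x \<longleftrightarrow> \<not> E x (vb V E b x)"

definition vprime :: "'a set \<Rightarrow> ('a \<Rightarrow> 'a \<Rightarrow> bool) \<Rightarrow> nat \<Rightarrow> 'a \<Rightarrow> 'a" where
  "vprime V E b x = (THE y. y \<in> V \<and> E x y \<and> \<not> E y (vb V E b x))"

definition Cset :: "'a set \<Rightarrow> ('a \<Rightarrow> 'a \<Rightarrow> bool) \<Rightarrow> nat \<Rightarrow> 'a \<Rightarrow> 'a set" where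
  "Cset V E b x = {x, vprime V E b x, vb V E b x, vb V E b (vprime V E b x)}"

end

theory Submission
  imports Defs
begin

lemma the_unique: "(\<And>y. P y \<longleftrightarrow> y = z) \<Longrightarrow> (THE y. P y) = z"
  by (rule the_equality) auto

locale dz =
  fixes V :: "'a set" and E :: "'a \<Rightarrow> 'a \<Rightarrow> bool" and n k a :: nat
  assumes dg: "deza_graph V E n k (k - 1) a"
    and k1: "k > 1"
    and beta: "\<forall>v\<in>V. deza_beta V E (k - 1) v = 1"
begin

definition N where "N u = {w\<in>V. E u w}"

abbreviation xb where "xb u \<equiv> vb V E (k - 1) u"
abbreviation xp where "xp u \<equiv> vprime V E (k - 1) u"

lemma fin: "finite V" using dg unfolding deza_graph_def by blast
lemma symE: "x\<in>V \<Longrightarrow> y\<in>V \<Longrightarrow> E x y \<Longrightarrow> E y x" using dg unfolding deza_graph_def by blast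
lemma irr: "x\<in>V \<Longrightarrow> \<not> E x x" using dg unfolding deza_graph_def by blast
lemma cardN: "x\<in>V \<Longrightarrow> card (N x) = k" using dg unfolding deza_graph_def N_def by blast
lemma finN: "finite (N x)" using fin unfolding N_def by simp
lemma NV: "N x \<subseteq> V" unfolding N_def by auto
lemma inN: "y \<in> N x \<longleftrightarrow> y \<in> V \<and> E x y" unfolding N_def by auto

lemma cn: "common_nbrs V E u v = card (N u \<inter> N v)"
  unfolding common_nbrs_def N_def by (rule arg_cong[where f=card]) auto

lemma cn_sym: "common_nbrs V E u v = common_nbrs V E v u"
  unfolding cn by (simp add: Int_commute)

lemma vb_char: assumes "x \<in> V"
  shows "\<exists>z. (\<forall>y. (y \<in> V \<and> y \<noteq> x \<and> common_nbrs V E x y = k - 1) \<longleftrightarrow> y = z)"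
proof -
  have "card {u \<in> V. u \<noteq> x \<and> common_nbrs V E u x = k - 1} = 1"
    using beta assms unfolding deza_beta_def by blast
  then obtain z where z: "{u \<in> V. u \<noteq> x \<and> common_nbrs V E u x = k - 1} = {z}"
    by (rule card_1_singletonE)
  show ?thesis
  proof (intro exI allI)
    fix y
    have "y \<in> {u \<in> V. u \<noteq> x \<and> common_nbrs V E u x = k - 1} \<longleftrightarrow> y \<in> {z}"
      using z by simp
    then show "(y \<in> V \<and> y \<noteq> x \<and> common_nbrs V E x y = k - 1) \<longleftrightarrow> y = z"
      using cn_sym[of y x] by simp
  qed
qed

lemma vb_props: assumes "x \<in> V"
  shows "xb x \<in> V \<and> xb x \<noteq> x \<and> common_nbrs V E x (xb x) = k - 1"
proof -
  obtain z where z: "\<And>y. (y \<in> V \<and> y \<noteq> x \<and> common_nbrs V E x y = k - 1) \<longleftrightarrow> y = z"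
    using vb_char[OF assms] by blast
  have "xb x = z" unfolding vb_def by (rule the_unique) (rule z)
  then show ?thesis using z[of z] by simp
qed

lemma vb_uniq: assumes "x \<in> V" "y \<in> V" "y \<noteq> x" "common_nbrs V E x y = k - 1"
  shows "y = xb x"
proof -
  obtain z where z: "\<And>y. (y \<in> V \<and> y \<noteq> x \<and> common_nbrs V E x y = k - 1) \<longleftrightarrow> y = z"
    using vb_char[OF assms(1)] by blast
  have "xb x = z" unfolding vb_def by (rule the_unique) (rule z)
  then show ?thesis using z[of y] assms by simp
qed

lemma vb_vb: assumes "x \<in> V" shows "xb (xb x) = x"
proof -
  have h: "xb x \<in> V" "xb x \<noteq> x" "common_nbrs V E x (xb x) = k - 1"
    using vb_props[OF assms] by auto
  have c: "common_nbrs V E (xb x) x = k - 1" using h(3) cn_sym[of "xb x" x] by simp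
  have "x = xb (xb x)"
    using vb_uniq[OF h(1) assms _ c] h(2) by metis
  then show ?thesis by simp
qed

lemma cn_a: assumes "x\<in>V" "y\<in>V" "y\<noteq>x" "y \<noteq> xb x"
  shows "card (N x \<inter> N y) = a"
proof -
  have "\<forall>u\<in>V. \<forall>v\<in>V. u \<noteq> v \<longrightarrow> common_nbrs V E u v = a \<or> common_nbrs V E u v = k - 1"
    using dg unfolding deza_graph_def by blast
  then have "common_nbrs V E x y = a \<or> common_nbrs V E x y = k - 1"
    using assms by auto
  moreover have "common_nbrs V E x y \<noteq> k - 1"
    using vb_uniq[of x y] assms by auto
  ultimately show ?thesis using cn by simp
qed

lemma diff1: assumes "x \<in> V" shows "card (N x - N (xb x)) = 1"
proof -
  have "card (N x - N (xb x)) = card (N x) - card (N x \<inter> N (xb x))"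
    by (simp add: card_Diff_subset_Int finN)
  moreover have "card (N x \<inter> N (xb x)) = k - 1"
    using vb_props[OF assms] unfolding cn by blast
  moreover have "card (N x) = k" using cardN assms by blast
  ultimately have "card (N x - N (xb x)) = k - (k - 1)" by simp
  also have "k - (k - 1) = 1" using k1 by simp
  finally show ?thesis .
qed

lemma vp: assumes "x \<in> V" shows "N x - N (xb x) = {xp x}"
proof -
  obtain z where z: "N x - N (xb x) = {z}" using diff1[OF assms] by (rule card_1_singletonE)
  have xbV: "xb x \<in> V" using vb_props assms by blast
  have eq: "\<And>y. (y \<in> V \<and> E x y \<and> \<not> E y (xb x)) \<longleftrightarrow> y = z"
  proof -
    fix y
    have "(y \<in> V \<and> E x y \<and> \<not> E y (xb x)) \<longleftrightarrow> y \<in> N x - N (xb x)"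
      unfolding N_def using symE xbV by blast
    then show "(y \<in> V \<and> E x y \<and> \<not> E y (xb x)) \<longleftrightarrow> y = z" using z by blast
  qed
  have "xp x = z" unfolding vprime_def by (rule the_unique) (rule eq)
  then show ?thesis using z by simp
qed

lemma xbV: "x \<in> V \<Longrightarrow> xb x \<in> V" using vb_props by blast
lemma xbne: "x \<in> V \<Longrightarrow> xb x \<noteq> x" using vb_props by blast
lemma xpN: "x \<in> V \<Longrightarrow> xp x \<in> V \<and> E x (xp x) \<and> \<not> E (xb x) (xp x)"
  using vp[of x] unfolding N_def by blast

lemma keyK:
  assumes x: "x \<in> V" and na: "\<not> E x (xb x)"
  shows "xb (xp x) = xp (xb x) \<and> xp (xp x) = x \<and> \<not> E (xp x) (xb (xp x))"
proof -
  define p where "p = xp x"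
  define q where "q = xb x"
  define r where "r = xp q"
  have qV: "q \<in> V" using xbV x q_def by simp
  have qq: "xb q = x" using vb_vb x q_def by simp
  have Nx: "N x - N q = {p}" using vp[OF x] p_def q_def by simp
  have Nq: "N q - N x = {r}" using vp[OF qV] qq r_def by simp
  have pV: "p \<in> V" and rV: "r \<in> V" using Nx Nq NV by auto
  have Exp: "E x p" using Nx unfolding N_def by blast
  have nEqp: "\<not> E q p" using Nx unfolding N_def by blast
  have Eqr: "E q r" using Nq unfolding N_def by blast
  have nExr: "\<not> E x r" using Nq unfolding N_def by blast
  define S where "S = N x \<inter> N q"
  have NxS: "N x = insert p S" and pS: "p \<notin> S" using Nx unfolding S_def by auto
  have NqS: "N q = insert r S" and rS: "r \<notin> S" using Nq unfolding S_def by auto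
  have finS: "finite S" unfolding S_def using finN by blast
  have eqv: "E u p \<longleftrightarrow> E u r" if u: "u \<in> V" "u \<noteq> x" "u \<noteq> q" for u
  proof -
    have c1: "card (N u \<inter> N x) = a" using cn_a[OF x u(1)] u q_def by (simp add: Int_commute)
    have c2: "card (N u \<inter> N q) = a" using cn_a[OF qV u(1)] u qq by (simp add: Int_commute)
    have f: "finite (N u \<inter> S)" using finS by blast
    have h1: "card (N u \<inter> N x) = card (N u \<inter> S) + (if p \<in> N u then 1 else 0)"
    proof (cases "p \<in> N u")
      case True
      then have "N u \<inter> N x = insert p (N u \<inter> S)" using NxS by auto
      then show ?thesis using True f pS by simp
    next
      case False
      then have "N u \<inter> N x = N u \<inter> S" using NxS by auto
      then show ?thesis using False by simp
    qed
    have h2: "card (N u \<inter> N q) = card (N u \<inter> S) + (if r \<in> N u then 1 else 0)"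
    proof (cases "r \<in> N u")
      case True
      then have "N u \<inter> N q = insert r (N u \<inter> S)" using NqS by auto
      then show ?thesis using True f rS by simp
    next
      case False
      then have "N u \<inter> N q = N u \<inter> S" using NqS by auto
      then show ?thesis using False by simp
    qed
    have "p \<in> N u \<longleftrightarrow> r \<in> N u" using h1 h2 c1 c2 by (auto split: if_splits)
    then show ?thesis using pV rV unfolding N_def by blast
  qed
  have rx: "r \<noteq> x" using Eqr na q_def symE qV x by blast
  have rq: "r \<noteq> q" using Eqr irr qV by blast
  have pr: "p \<noteq> r" using Exp nExr by blast
  have Int: "N p \<inter> N r = N p - {x}"
  proof (rule set_eqI)
    fix u
    show "u \<in> N p \<inter> N r \<longleftrightarrow> u \<in> N p - {x}"
    proof (cases "u = x")
      case True
      then show ?thesis using nExr symE rV x by (auto simp: N_def)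
    next
      case False
      show ?thesis
      proof (cases "u = q")
        case True
        then show ?thesis using nEqp symE pV qV by (auto simp: N_def)
      next
        case False2: False
        show ?thesis
        proof (cases "u \<in> V")
          case True
          then have "E u p \<longleftrightarrow> E u r" using eqv False False2 by blast
          then have "E p u \<longleftrightarrow> E r u" using symE True pV rV by blast
          then show ?thesis using False by (auto simp: N_def)
        next
          case False
          then show ?thesis by (auto simp: N_def)
        qed
      qed
    qed
  qed
  have xNp: "x \<in> N p" using Exp symE x pV unfolding N_def by blast
  have "card (N p \<inter> N r) = k - 1" unfolding Int using xNp cardN[OF pV] finN by simp
  then have rb: "r = xb p" using vb_uniq[OF pV rV] pr cn by metis
  have nEpr: "\<not> E p r"
  proof
    assume "E p r"
    then have "E r p" using symE pV rV by blast
    then have "E r r" using eqv[OF rV rx rq] by blast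
    then show False using irr rV by blast
  qed
  have "N p - N r = {x}" using Int xNp by blast
  then have "xp p = x" using vp[OF pV] rb by simp
  then show ?thesis using rb nEpr p_def q_def r_def by simp
qed

lemma NA_facts:
  assumes x: "x \<in> V" and na: "\<not> E x (xb x)"
  shows "xp x \<in> V" "E x (xp x)" "\<not> E x (xb (xp x))" "\<not> E (xp x) (xb (xp x))"
    "xp (xp x) = x" "xb (xp x) = xp (xb x)" "xb x \<in> V" "\<not> E (xb x) (xb (xb x))"
    "xb (xb x) = x" "xb (xp x) \<in> V"
proof -
  have q: "xb x \<in> V" using xbV x by blast
  have qq: "xb (xb x) = x" using vb_vb x by blast
  have Nq: "N (xb x) - N x = {xp (xb x)}" using vp[OF q] qq by simp
  have K: "xb (xp x) = xp (xb x)" "xp (xp x) = x" "\<not> E (xp x) (xb (xp x))"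
    using keyK[OF x na] by auto
  show "xp x \<in> V" "E x (xp x)" using xpN x by auto
  show "\<not> E x (xb (xp x))" using Nq K(1) unfolding N_def by blast
  show "\<not> E (xp x) (xb (xp x))" "xp (xp x) = x" "xb (xp x) = xp (xb x)" using K by auto
  show "xb x \<in> V" "xb (xb x) = x" using q qq by auto
  show "\<not> E (xb x) (xb (xb x))" using qq na symE x q by metis
  show "xb (xp x) \<in> V" using Nq K(1) unfolding N_def by blast
qed

lemma Cset_closed:
  assumes x: "x \<in> V" and na: "\<not> E x (xb x)" and z: "z \<in> Cset V E (k - 1) x"
  shows "z \<in> V \<and> \<not> E z (xb z) \<and> Cset V E (k - 1) z = Cset V E (k - 1) x"
proof -
  note F = NA_facts[OF x na]
  define p where "p = xp x"
  define q where "q = xb x"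
  define r where "r = xp q"
  have q: "q \<in> V" "\<not> E q (xb q)" using F q_def by auto
  note G = NA_facts[OF q]
  have p: "p \<in> V" "\<not> E p (xb p)" using F p_def by auto
  have rV: "r \<in> V" "\<not> E r (xb r)" using G r_def by auto
  have e1: "xb p = r" using F p_def q_def r_def by simp
  have e2: "xp p = x" using F p_def by simp
  have e3: "xb q = x" using F q_def by simp
  have e4: "xb r = p" using G e3 p_def r_def by simp
  have e5: "xp r = q" using G r_def by simp
  have Cx: "Cset V E (k - 1) x = {x, p, q, r}" unfolding Cset_def using e1 p_def q_def by auto
  have Cp: "Cset V E (k - 1) p = {x, p, q, r}" unfolding Cset_def using e1 e2 q_def by auto
  have Cq: "Cset V E (k - 1) q = {x, p, q, r}" unfolding Cset_def using e3 e4 r_def by auto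
  have Cr: "Cset V E (k - 1) r = {x, p, q, r}" unfolding Cset_def using e4 e5 e3 by auto
  have "z = x \<or> z = p \<or> z = q \<or> z = r" using z Cx by auto
  then show ?thesis using Cx Cp Cq Cr x na p q rV by auto
qed

lemma lemM:
  assumes u: "u \<in> V" "\<not> E u (xb u)" and w: "w \<in> V" and uw: "E u w" and ne: "w \<noteq> xp u"
  shows "E u (xb w)"
proof (rule ccontr)
  assume nE: "\<not> E u (xb w)"
  have wb: "xb w \<in> V" using xbV w by blast
  have "u \<in> N w - N (xb w)" using uw nE symE u w wb unfolding N_def by blast
  then have uxp: "u = xp w" using vp[OF w] by blast
  show False
  proof (cases "E w (xb w)")
    case True
    then have "xb w \<in> N w - N (xb w)" using irr wb unfolding N_def by blast
    then have "xb w = u" using vp[OF w] uxp by blast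
    then have "xb u = w" using vb_vb w by blast
    then show False using u uw by simp
  next
    case False
    then have "xp u = w" using keyK[OF w] uxp by simp
    then show False using ne by simp
  qed
qed

lemma even_inv:
  assumes "finite A" "\<forall>w\<in>A. f w \<in> A \<and> f w \<noteq> w \<and> f (f w) = w"
  shows "even (card A)"
  using assms
proof (induction "card A" arbitrary: A rule: less_induct)
  case less
  show ?case
  proof (cases "A = {}")
    case True then show ?thesis by simp
  next
    case False
    then obtain w where w: "w \<in> A" by blast
    define B where "B = A - {w, f w}"
    have fw: "f w \<in> A" "f w \<noteq> w" using less.prems w by auto
    have cB: "card A = card B + 2"
    proof -
      have "card B = card A - card {w, f w}" unfolding B_def
        using less.prems(1) w fw by (simp add: card_Diff_subset)
      moreover have "card {w, f w} = 2" using fw by simp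
      moreover have "card A \<ge> 2"
      proof -
        have "{w, f w} \<subseteq> A" using w fw by auto
        then have "card {w, f w} \<le> card A" using less.prems(1) by (rule card_mono[rotated])
        then show ?thesis using fw by simp
      qed
      ultimately show ?thesis by simp
    qed
    have clB: "\<forall>v\<in>B. f v \<in> B \<and> f v \<noteq> v \<and> f (f v) = v"
    proof
      fix v assume v: "v \<in> B"
      then have vA: "v \<in> A" "v \<noteq> w" "v \<noteq> f w" unfolding B_def by auto
      have h: "f v \<in> A" "f v \<noteq> v" "f (f v) = v" using less.prems vA by auto
      have "f v \<noteq> w" using h vA by auto
      moreover have "f v \<noteq> f w"
      proof
        assume "f v = f w"
        then have "f (f v) = f (f w)" by simp
        then show False using h less.prems w vA by auto
      qed
      ultimately show "f v \<in> B \<and> f v \<noteq> v \<and> f (f v) = v" using h unfolding B_def by auto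
    qed
    have "even (card B)"
      using less.hyps[of B] cB clB less.prems(1) unfolding B_def by auto
    then show ?thesis using cB by simp
  qed
qed

lemma a_even:
  assumes x: "x \<in> V" and na: "\<not> E x (xb x)"
  shows "even a"
proof -
  note F = NA_facts[OF x na]
  define p where "p = xp x"
  have pV: "p \<in> V" and Exp: "E x p" and pna: "\<not> E p (xb p)" and pp: "xp p = x"
    using F p_def by auto
  have "p \<noteq> x" using Exp irr x by blast
  moreover have "p \<noteq> xb x" using Exp na by blast
  ultimately have ca: "card (N x \<inter> N p) = a" using cn_a[OF x pV] by blast
  have "even (card (N x \<inter> N p))"
  proof (rule even_inv[where f = xb])
    show "finite (N x \<inter> N p)" using finN by blast
    show "\<forall>w\<in>N x \<inter> N p. xb w \<in> N x \<inter> N p \<and> xb w \<noteq> w \<and> xb (xb w) = w"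
    proof
      fix w assume w: "w \<in> N x \<inter> N p"
      then have wV: "w \<in> V" and Exw: "E x w" and Epw: "E p w" unfolding N_def by auto
      have "w \<noteq> p" using Epw irr pV by blast
      then have "E x (xb w)" using lemM[OF x na wV Exw] p_def by simp
      moreover have "w \<noteq> xp p" using pp Exw irr x by blast
      then have "E p (xb w)" using lemM[OF pV pna wV Epw] by simp
      ultimately show "xb w \<in> N x \<inter> N p \<and> xb w \<noteq> w \<and> xb (xb w) = w"
        using xbV[OF wV] xbne[OF wV] vb_vb[OF wV] unfolding N_def by auto
    qed
  qed
  then show ?thesis using ca by simp
qed

lemma parity:
  assumes x: "x \<in> V" and nax: "\<not> E x (xb x)" and y: "y \<in> V" and nay: "\<not> E y (xb y)"
    and xy: "y \<noteq> x" "y \<noteq> xb x" and pp: "xp x \<noteq> xp y"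
  shows "E (xp x) y \<longleftrightarrow> E x (xp y)"
proof -
  note F = NA_facts[OF x nax]
  note G = NA_facts[OF y nay]
  define p where "p = xp x"
  define p2 where "p2 = xp y"
  have pV: "p \<in> V" and Exp: "E x p" and nxr: "\<not> E x (xb p)" using F p_def by auto
  have p2V: "p2 \<in> V" and Eyp2: "E y p2" and nyr: "\<not> E y (xb p2)" using G p2_def by auto
  have ae: "even a" using a_even[OF x nax] .
  have ca: "card (N x \<inter> N y) = a" using cn_a[OF x y xy] .
  define W where "W = N x \<inter> N y - {p, p2}"
  have finW: "finite W" unfolding W_def using finN by blast
  have eW: "even (card W)"
  proof (rule even_inv[where f = xb, OF finW])
    show "\<forall>w\<in>W. xb w \<in> W \<and> xb w \<noteq> w \<and> xb (xb w) = w"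
    proof
      fix w assume w: "w \<in> W"
      then have wV: "w \<in> V" and Exw: "E x w" and Eyw: "E y w" and wp: "w \<noteq> p" "w \<noteq> p2"
        unfolding W_def N_def by auto
      have 1: "E x (xb w)" using lemM[OF x nax wV Exw] wp p_def by simp
      have 2: "E y (xb w)" using lemM[OF y nay wV Eyw] wp p2_def by simp
      have bb: "xb (xb w) = w" using vb_vb[OF wV] .
      have 3: "xb w \<noteq> p"
      proof
        assume "xb w = p"
        then have "w = xb p" using bb by metis
        then show False using Exw nxr by simp
      qed
      have 4: "xb w \<noteq> p2"
      proof
        assume "xb w = p2"
        then have "w = xb p2" using bb by metis
        then show False using Eyw nyr by simp
      qed
      show "xb w \<in> W \<and> xb w \<noteq> w \<and> xb (xb w) = w"
        using 1 2 3 4 bb xbV[OF wV] xbne[OF wV] unfolding W_def N_def by auto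
    qed
  qed
  define I where "I = N x \<inter> N y"
  have pp2: "p \<noteq> p2" using pp p_def p2_def by simp
  have split: "I = W \<union> ({p, p2} \<inter> I)" unfolding W_def I_def by auto
  have disj: "W \<inter> ({p, p2} \<inter> I) = {}" unfolding W_def by auto
  have "card I = card W + card ({p, p2} \<inter> I)"
    using card_Un_disjoint[OF finW _ disj] split finN by (metis finite_Int finite_insert finite.emptyI)
  moreover have "card ({p, p2} \<inter> I) = (if p \<in> I then 1 else 0) + (if p2 \<in> I then 1 else 0)"
    using pp2 by (auto simp: Int_insert_left)
  moreover have "p \<in> I \<longleftrightarrow> E p y" unfolding I_def N_def using pV y Exp symE by blast
  moreover have "p2 \<in> I \<longleftrightarrow> E x p2" unfolding I_def N_def using p2V x Eyp2 by blast
  ultimately have "a = card W + (if E p y then 1 else 0) + (if E x p2 then 1 else 0)"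
    using ca I_def by simp
  then show ?thesis using ae eW p_def p2_def by (auto split: if_splits)
qed

end

theorem lemma16:
  fixes V :: "'a set" and E :: "'a \<Rightarrow> 'a \<Rightarrow> bool" and n k a :: nat and x y :: 'a
  assumes "deza_graph V E n k (k - 1) a"
    and "k > 1"
    and "\<forall>v\<in>V. deza_beta V E (k - 1) v = 1"
    and "x \<in> V" and "y \<in> V"
    and "NA_vertex V E (k - 1) x" and "NA_vertex V E (k - 1) y"
    and "Cset V E (k - 1) x \<noteq> Cset V E (k - 1) y"
  shows "(E (vprime V E (k - 1) x) y \<longleftrightarrow> E x (vprime V E (k - 1) y))
       \<and> (E x y \<longleftrightarrow> E (vprime V E (k - 1) x) (vprime V E (k - 1) y))"
proof -
  interpret dz V E n k a using assms(1-3) by unfold_locales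
  have nax: "\<not> E x (xb x)" and nay: "\<not> E y (xb y)"
    using assms(6,7) unfolding NA_vertex_def by auto
  note x = assms(4) and y = assms(5)
  have yC: "y \<notin> Cset V E (k - 1) x"
    using Cset_closed[OF x nax] assms(8) by metis
  have p2Cy: "xp y \<in> Cset V E (k - 1) y" unfolding Cset_def by simp
  have p2C: "xp y \<notin> Cset V E (k - 1) x"
    using Cset_closed[OF x nax] Cset_closed[OF y nay p2Cy] assms(8) by metis
  have inC: "x \<in> Cset V E (k - 1) x" "xp x \<in> Cset V E (k - 1) x" "xb x \<in> Cset V E (k - 1) x"
    unfolding Cset_def by auto
  note G = NA_facts[OF y nay]
  have 1: "E (xp x) y \<longleftrightarrow> E x (xp y)"
    by (rule parity[OF x nax y nay]) (use yC p2C inC in auto)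
  have 2: "E (xp x) (xp y) \<longleftrightarrow> E x (xp (xp y))"
    by (rule parity[OF x nax]) (use yC p2C inC G in auto)
  show ?thesis using 1 2 G by auto
qed

end
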